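(* For each $h\in[H]$ there exist maps $\zeta_h,\chi_h:\mathcal M\to\mathbb R^{L_h/|\mathcal O|}$ such that for all $M,M'\in\mathcal M$, $\mathcal W_F(M,M',h)=\langle\zeta_h(M),\chi_h(M')\rangle$, and $\|\zeta_h(M)\|_2\|\chi_h(M')\|_2\le O(L_h/K)$.
   Context: Factored MDP setting: $\mathcal O$ finite, $\mathcal X=[H]\times\mathcal O^d$ layered by time, $|\mathcal A|=K$; known parent sets $\mathrm{pa}_i\subseteq[d]$; transitions $P(x'|x,a)=\prod_{i=1}^dP^{(i)}[x'[i]\mid x[\mathrm{pa}_i],a,h]$ for $x\in\mathcal X_h$; known reward $R^\star$ shared by all models; $\mathcal M$ is the set of all models with reward $R^\star$ and transitions factorizing with these parents, and the true model $M^\star\in\mathcal M$. $L_h=\sum_{i=1}^dK|\mathcal O|^{1+|\mathrm{pa}_i|}$. For a model $M$, $\pi_M$ is its greedy optimal policy; $x_h\sim\pi$ is the step-$h$ context when running $\pi$ in the true MDP; $(r,x')\sim M_h$ means $r\sim R^\star(x_h,a_h)$, $x'\sim P(x_h,a_h)$. Test class $\mathcal F=\{g_1+\dots+g_d:g_i\in\mathcal G_i\}$, $\mathcal G_i$ the set of all $\{-1,1\}$-valued functions of $(x,a,r,x')$ depending only on $(x[\mathrm{pa}_i],a,h,x'[i])$. $\mathcal W_F(M,M',h)=\max_{f\in\mathcal F}\mathbb E_{x_h\sim\pi_M,a_h\sim U(\mathcal A)}[\mathbb E_{(r,x')\sim M'_h}f(x_h,a_h,r,x')-\mathbb E_{(r,x')\sim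 M^\star_h}f(x_h,a_h,r,x')]$. *)

theory Defs
  imports "HOL-Library.FuncSet" Complex_Main
begin

text \<open>Observation space O = {..<m}; features indexed by {..<d}; actions {..<K};
  time steps (layers) h \<in> {..<H} (0-indexed).  A context at step h is a
  vector x \<in> O^d, represented as an extensional function on {..<d}.\<close>

type_synonym obs = "nat \<Rightarrow> nat"

text \<open>Transition components of a factored model:  T i h z a o'  is
  P^(i)[o' | x[pa_i] = z, a, h].\<close>
type_synonym ftrans = "nat \<Rightarrow> nat \<Rightarrow> obs \<Rightarrow> nat \<Rightarrow> nat \<Rightarrow> real"

definition Obs :: "nat \<Rightarrow> nat \<Rightarrow> obs set" where
  "Obs d m = ({..<d} \<rightarrow>\<^sub>E {..<m})"

text \<open>The class of all models with the given parent structure (reward shared).\<close>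
definition fmodels :: "nat \<Rightarrow> nat \<Rightarrow> nat \<Rightarrow> nat \<Rightarrow> (nat \<Rightarrow> nat set) \<Rightarrow> ftrans set" where
  "fmodels H d m K pa = {T. \<forall>i<d. \<forall>h<H. \<forall>z \<in> pa i \<rightarrow>\<^sub>E {..<m}. \<forall>a<K.
      (\<forall>o'<m. 0 \<le> T i h z a o') \<and> (\<Sum>o'<m. T i h z a o') = 1}"

definition trans_prob :: "nat \<Rightarrow> (nat \<Rightarrow> nat set) \<Rightarrow> ftrans \<Rightarrow> nat \<Rightarrow> obs \<Rightarrow> nat \<Rightarrow> obs \<Rightarrow> real" where
  "trans_prob d pa T h x a x' = (\<Prod>i<d. T i h (restrict x (pa i)) a (x' i))"

text \<open>Optimal value in model T with n steps to go (so at step H - n); R is the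
  (shared, known) mean reward  R h x a.\<close>
primrec value_togo :: "nat \<Rightarrow> nat \<Rightarrow> nat \<Rightarrow> nat \<Rightarrow> (nat \<Rightarrow> nat set) \<Rightarrow> (nat \<Rightarrow> obs \<Rightarrow> nat \<Rightarrow> real)
    \<Rightarrow> ftrans \<Rightarrow> nat \<Rightarrow> obs \<Rightarrow> real" where
  "value_togo H d m K pa R T 0 x = 0"
| "value_togo H d m K pa R T (Suc n) x =
     (MAX a \<in> {..<K}. R (H - Suc n) x a +
        (\<Sum>x'\<in>Obs d m. trans_prob d pa T (H - Suc n) x a x' * value_togo H d m K pa R T n x'))"

definition Qval :: "nat \<Rightarrow> nat \<Rightarrow> nat \<Rightarrow> nat \<Rightarrow> (nat \<Rightarrow> nat set) \<Rightarrow> (nat \<Rightarrow> obs \<Rightarrow> nat \<Rightarrow> real)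
    \<Rightarrow> ftrans \<Rightarrow> nat \<Rightarrow> obs \<Rightarrow> nat \<Rightarrow> real" where
  "Qval H d m K pa R T h x a =
     R h x a + (\<Sum>x'\<in>Obs d m. trans_prob d pa T h x a x' * value_togo H d m K pa R T (H - Suc h) x')"

definition greedy_policy :: "nat \<Rightarrow> nat \<Rightarrow> nat \<Rightarrow> nat \<Rightarrow> (nat \<Rightarrow> nat set) \<Rightarrow> (nat \<Rightarrow> obs \<Rightarrow> nat \<Rightarrow> real)
    \<Rightarrow> ftrans \<Rightarrow> nat \<Rightarrow> obs \<Rightarrow> nat" where
  "greedy_policy H d m K pa R T h x =
     (LEAST a. a < K \<and> (\<forall>b<K. Qval H d m K pa R T h x b \<le> Qval H d m K pa R T h x a))"

primrec state_dist :: "nat \<Rightarrow> nat \<Rightarrow> (nat \<Rightarrow> nat set) \<Rightarrow> ftrans \<Rightarrow> (obs \<Rightarrow> real)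
    \<Rightarrow> (nat \<Rightarrow> obs \<Rightarrow> nat) \<Rightarrow> nat \<Rightarrow> obs \<Rightarrow> real" where
  "state_dist d m pa Tstar mu0 pol 0 x = mu0 x"
| "state_dist d m pa Tstar mu0 pol (Suc h) x' =
     (\<Sum>x\<in>Obs d m. state_dist d m pa Tstar mu0 pol h x * trans_prob d pa Tstar h x (pol h x) x')"

text \<open>A test function f = g_1 + ... + g_d with
  g_i \<in> G_i is given by g :: i \<Rightarrow> x[pa_i] \<Rightarrow> a \<Rightarrow> x'[i] \<Rightarrow> {-1,1}
  (h is fixed; r is irrelevant since the g_i do not depend on it).\<close>
definition W_F :: "nat \<Rightarrow> nat \<Rightarrow> nat \<Rightarrow> nat \<Rightarrow> (nat \<Rightarrow> nat set) \<Rightarrow> (nat \<Rightarrow> obs \<Rightarrow> nat \<Rightarrow> real)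
    \<Rightarrow> (obs \<Rightarrow> real) \<Rightarrow> ftrans \<Rightarrow> ftrans \<Rightarrow> ftrans \<Rightarrow> nat \<Rightarrow> real" where
  "W_F H d m K pa R mu0 Tstar T T' h =
     (SUP g \<in> {g :: nat \<Rightarrow> obs \<Rightarrow> nat \<Rightarrow> nat \<Rightarrow> real. \<forall>i z a y. g i z a y \<in> {-1, 1}}.
        (\<Sum>x\<in>Obs d m. state_dist d m pa Tstar mu0 (greedy_policy H d m K pa R T) h x *
           (\<Sum>a<K. (1 / real K) *
              (\<Sum>x'\<in>Obs d m. (trans_prob d pa T' h x a x' - trans_prob d pa Tstar h x a x') *
                 (\<Sum>i<d. g i (restrict x (pa i)) a (x' i))))))"

definition L_dim :: "nat \<Rightarrow> nat \<Rightarrow> nat \<Rightarrow> (nat \<Rightarrow> nat set) \<Rightarrow> nat" where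
  "L_dim d m K pa = (\<Sum>i<d. K * m ^ (1 + card (pa i)))"

text \<open>Vectors in R^n as functions nat \<Rightarrow> real restricted to {..<n}.\<close>
definition vinner :: "nat \<Rightarrow> (nat \<Rightarrow> real) \<Rightarrow> (nat \<Rightarrow> real) \<Rightarrow> real" where
  "vinner n u v = (\<Sum>j<n. u j * v j)"

definition vnorm :: "nat \<Rightarrow> (nat \<Rightarrow> real) \<Rightarrow> real" where
  "vnorm n v = sqrt (\<Sum>j<n. (v j)\<^sup>2)"

end

theory Submission imports Defs begin

lemma prod_marg:
  fixes p :: "nat \<Rightarrow> nat \<Rightarrow> real"
  assumes i: "i < d" and s: "\<And>j. j<d \<Longrightarrow> sum (p j) {..<m} = 1"
  shows "(\<Sum>x'\<in>Obs d m. (\<Prod>j<d. p j (x' j)) * f (x' i)) = (\<Sum>y<m. p i y * f y)"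
proof -
  define q where "q j y = (if j = i then p j y * f y else p j y)" for j y
  have "(\<Sum>x'\<in>Obs d m. (\<Prod>j<d. p j (x' j)) * f (x' i)) = (\<Sum>x'\<in>Obs d m. \<Prod>j<d. q j (x' j))"
  proof (rule sum.cong[OF refl])
    fix x' :: obs
    have "(\<Prod>j<d. q j (x' j)) = q i (x' i) * (\<Prod>j\<in>{..<d}-{i}. q j (x' j))"
      using i by (simp add: prod.remove)
    also have "(\<Prod>j\<in>{..<d}-{i}. q j (x' j)) = (\<Prod>j\<in>{..<d}-{i}. p j (x' j))"
      by (rule prod.cong) (auto simp: q_def)
    also have "(\<Prod>j<d. p j (x' j)) = p i (x' i) * (\<Prod>j\<in>{..<d}-{i}. p j (x' j))"
      using i by (simp add: prod.remove)
    ultimately show "(\<Prod>j<d. p j (x' j)) * f (x' i) = (\<Prod>j<d. q j (x' j))"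
      by (simp add: q_def)
  qed
  also have "\<dots> = (\<Prod>j<d. \<Sum>y<m. q j y)"
    unfolding Obs_def by (rule prod_sum_PiE[symmetric]) auto
  also have "\<dots> = (\<Sum>y<m. q i y) * (\<Prod>j\<in>{..<d}-{i}. \<Sum>y<m. q j y)"
    using i by (simp add: prod.remove)
  also have "(\<Prod>j\<in>{..<d}-{i}. \<Sum>y<m. q j y) = 1"
    by (rule prod.neutral) (auto simp: q_def s)
  finally show ?thesis by (simp add: q_def)
qed

lemma prod_total:
  fixes p :: "nat \<Rightarrow> nat \<Rightarrow> real"
  assumes s: "\<And>j. j<d \<Longrightarrow> sum (p j) {..<m} = 1"
  shows "(\<Sum>x'\<in>Obs d m. (\<Prod>j<d. p j (x' j))) = 1"
proof -
  have "(\<Sum>x'\<in>Obs d m. (\<Prod>j<d. p j (x' j))) = (\<Prod>j<d. \<Sum>y<m. p j y)"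
    unfolding Obs_def by (rule prod_sum_PiE[symmetric]) auto
  also have "\<dots> = 1" by (rule prod.neutral) (auto simp: s)
  finally show ?thesis .
qed

lemma finite_Obs: "finite (Obs d m)" unfolding Obs_def by (auto intro: finite_PiE)

lemma greedy_lt:
  assumes "0 < K"
  shows "greedy_policy H d m K pa R T h x < K"
proof -
  let ?Q = "\<lambda>a. Qval H d m K pa R T h x a"
  have ne: "?Q ` {..<K} \<noteq> {}" using assms by auto
  have "Max (?Q ` {..<K}) \<in> ?Q ` {..<K}" using ne by (intro Max_in) auto
  then obtain a where a: "a < K" "?Q a = Max (?Q ` {..<K})" by auto
  have "\<forall>b<K. ?Q b \<le> ?Q a" using a by (auto intro: Max_ge)
  then have "\<exists>a. a < K \<and> (\<forall>b<K. ?Q b \<le> ?Q a)" using a by blast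
  from LeastI_ex[OF this] show ?thesis unfolding greedy_policy_def by blast
qed

locale fm =
  fixes H d m K :: nat and pa :: "nat \<Rightarrow> nat set" and Tstar :: ftrans and mu0 :: "obs \<Rightarrow> real"
  assumes mpos: "0 < m" and Kpos: "0 < K" and pa_sub: "\<forall>i<d. pa i \<subseteq> {..<d}"
    and Ts: "Tstar \<in> fmodels H d m K pa"
    and mu_nn: "\<forall>x\<in>Obs d m. 0 \<le> mu0 x" and mu_sum: "(\<Sum>x\<in>Obs d m. mu0 x) = 1"
begin

lemma restr: "x \<in> Obs d m \<Longrightarrow> i < d \<Longrightarrow> restrict x (pa i) \<in> pa i \<rightarrow>\<^sub>E {..<m}"
  using pa_sub unfolding Obs_def by (auto simp: PiE_iff)

lemma fm_props:
  assumes "T \<in> fmodels H d m K pa" "i < d" "h < H" "z \<in> pa i \<rightarrow>\<^sub>E {..<m}" "a < K"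
  shows "sum (T i h z a) {..<m} = 1" "o' < m \<Longrightarrow> 0 \<le> T i h z a o'"
  using assms unfolding fmodels_def by auto

lemma tp_marg:
  assumes "T \<in> fmodels H d m K pa" "h < H" "x \<in> Obs d m" "a < K" "i < d"
  shows "(\<Sum>x'\<in>Obs d m. trans_prob d pa T h x a x' * f (x' i))
       = (\<Sum>y<m. T i h (restrict x (pa i)) a y * f y)"
  unfolding trans_prob_def
  by (rule prod_marg[where p = "\<lambda>j. T j h (restrict x (pa j)) a", OF assms(5)])
     (use assms restr fm_props in auto)

lemma tp_sum:
  assumes "T \<in> fmodels H d m K pa" "h < H" "x \<in> Obs d m" "a < K"
  shows "(\<Sum>x'\<in>Obs d m. trans_prob d pa T h x a x') = 1"
  unfolding trans_prob_def
  by (rule prod_total[where p = "\<lambda>j. T j h (restrict x (pa j)) a"])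
     (use assms restr fm_props in auto)

lemma tp_nn:
  assumes "T \<in> fmodels H d m K pa" "h < H" "x \<in> Obs d m" "a < K" "x' \<in> Obs d m"
  shows "0 \<le> trans_prob d pa T h x a x'"
  unfolding trans_prob_def
proof (intro prod_nonneg)
  fix j assume j: "j \<in> {..<d}"
  have "x' j < m" using assms(5) j unfolding Obs_def by auto
  then show "0 \<le> T j h (restrict x (pa j)) a (x' j)"
    using fm_props(2)[OF assms(1) _ assms(2) restr[OF assms(3)] assms(4)] j by auto
qed

lemma sd:
  assumes pol: "\<And>h x. pol h x < K"
  shows "h \<le> H \<Longrightarrow> (\<forall>x\<in>Obs d m. 0 \<le> state_dist d m pa Tstar mu0 pol h x)
     \<and> (\<Sum>x\<in>Obs d m. state_dist d m pa Tstar mu0 pol h x) = 1"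
proof (induction h)
  case 0 then show ?case using mu_nn mu_sum by simp
next
  case (Suc n)
  then have n: "n < H" and IH: "\<forall>x\<in>Obs d m. 0 \<le> state_dist d m pa Tstar mu0 pol n x"
      "(\<Sum>x\<in>Obs d m. state_dist d m pa Tstar mu0 pol n x) = 1" by auto
  have "\<forall>x\<in>Obs d m. 0 \<le> state_dist d m pa Tstar mu0 pol (Suc n) x"
  proof
    fix x' assume x': "x' \<in> Obs d m"
    show "0 \<le> state_dist d m pa Tstar mu0 pol (Suc n) x'"
      unfolding state_dist.simps
    proof (rule sum_nonneg)
      fix x assume x: "x \<in> Obs d m"
      show "0 \<le> state_dist d m pa Tstar mu0 pol n x * trans_prob d pa Tstar n x (pol n x) x'"
        using IH(1) x tp_nn[OF Ts n x pol x'] by simp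
    qed
  qed
  moreover have "(\<Sum>x'\<in>Obs d m. state_dist d m pa Tstar mu0 pol (Suc n) x') = 1"
  proof -
    have "(\<Sum>x'\<in>Obs d m. state_dist d m pa Tstar mu0 pol (Suc n) x')
       = (\<Sum>x\<in>Obs d m. state_dist d m pa Tstar mu0 pol n x *
            (\<Sum>x'\<in>Obs d m. trans_prob d pa Tstar n x (pol n x) x'))"
      unfolding state_dist.simps sum_distrib_left by (rule sum.swap)
    also have "\<dots> = (\<Sum>x\<in>Obs d m. state_dist d m pa Tstar mu0 pol n x)"
      by (rule sum.cong[OF refl]) (simp add: tp_sum[OF Ts n _ pol])
    finally show ?thesis using IH(2) by simp
  qed
  ultimately show ?case ..
qed


lemma inner_step:
  assumes T': "T' \<in> fmodels H d m K pa" and h: "h < H" and x: "x \<in> Obs d m" and a: "a < K"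
  shows "(\<Sum>x'\<in>Obs d m. (trans_prob d pa T' h x a x' - trans_prob d pa Tstar h x a x') *
             (\<Sum>i<d. g i (restrict x (pa i)) a (x' i)))
       = (\<Sum>i<d. \<Sum>y<m. (T' i h (restrict x (pa i)) a y - Tstar i h (restrict x (pa i)) a y) *
             g i (restrict x (pa i)) a y)"
proof -
  have "(\<Sum>x'\<in>Obs d m. (trans_prob d pa T' h x a x' - trans_prob d pa Tstar h x a x') *
             (\<Sum>i<d. g i (restrict x (pa i)) a (x' i)))
     = (\<Sum>i<d. (\<Sum>x'\<in>Obs d m. trans_prob d pa T' h x a x' * g i (restrict x (pa i)) a (x' i))
             - (\<Sum>x'\<in>Obs d m. trans_prob d pa Tstar h x a x' * g i (restrict x (pa i)) a (x' i)))"
    by (simp add: sum_distrib_left left_diff_distrib sum_subtractf sum.swap[where A = "Obs d m"])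
  also have "\<dots> = (\<Sum>i<d. (\<Sum>y<m. T' i h (restrict x (pa i)) a y * g i (restrict x (pa i)) a y)
             - (\<Sum>y<m. Tstar i h (restrict x (pa i)) a y * g i (restrict x (pa i)) a y))"
    by (rule sum.cong[OF refl])
       (simp add: tp_marg[OF T' h x a] tp_marg[OF Ts h x a])
  also have "\<dots> = (\<Sum>i<d. \<Sum>y<m. (T' i h (restrict x (pa i)) a y - Tstar i h (restrict x (pa i)) a y) *
             g i (restrict x (pa i)) a y)"
    by (simp add: left_diff_distrib sum_subtractf)
  finally show ?thesis .
qed

lemma Vg:
  assumes T': "T' \<in> fmodels H d m K pa" and h: "h < H"
  shows "(\<Sum>x\<in>Obs d m. D x * (\<Sum>a<K. (1 / real K) *
           (\<Sum>x'\<in>Obs d m. (trans_prob d pa T' h x a x' - trans_prob d pa Tstar h x a x') *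
             (\<Sum>i<d. g i (restrict x (pa i)) a (x' i)))))
   = (\<Sum>i<d. \<Sum>z\<in>pa i \<rightarrow>\<^sub>E {..<m}. (\<Sum>x\<in>{x\<in>Obs d m. restrict x (pa i) = z}. D x) *
        (\<Sum>a<K. (1 / real K) * (\<Sum>y<m. (T' i h z a y - Tstar i h z a y) * g i z a y)))"
proof -
  define Phi where "Phi i z = (\<Sum>a<K. (1 / real K) * (\<Sum>y<m. (T' i h z a y - Tstar i h z a y) * g i z a y))" for i z
  have "(\<Sum>x\<in>Obs d m. D x * (\<Sum>a<K. (1 / real K) *
           (\<Sum>x'\<in>Obs d m. (trans_prob d pa T' h x a x' - trans_prob d pa Tstar h x a x') *
             (\<Sum>i<d. g i (restrict x (pa i)) a (x' i)))))
     = (\<Sum>x\<in>Obs d m. D x * (\<Sum>a<K. (1 / real K) *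
           (\<Sum>i<d. \<Sum>y<m. (T' i h (restrict x (pa i)) a y - Tstar i h (restrict x (pa i)) a y) *
             g i (restrict x (pa i)) a y)))"
    by (intro sum.cong refl arg_cong2[where f = "(*)"]) (simp add: inner_step[OF T' h])
  also have "\<dots> = (\<Sum>x\<in>Obs d m. \<Sum>i<d. D x * Phi i (restrict x (pa i)))"
    by (simp add: Phi_def sum_distrib_left sum.swap[where A = "{..<K}"])
  also have "\<dots> = (\<Sum>i<d. \<Sum>x\<in>Obs d m. D x * Phi i (restrict x (pa i)))"
    by (rule sum.swap)
  also have "\<dots> = (\<Sum>i<d. \<Sum>z\<in>pa i \<rightarrow>\<^sub>E {..<m}. (\<Sum>x\<in>{x\<in>Obs d m. restrict x (pa i) = z}. D x) * Phi i z)"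
  proof (rule sum.cong[OF refl])
    fix i assume i: "i \<in> {..<d}"
    have fin: "finite (pa i \<rightarrow>\<^sub>E {..<m})"
      using pa_sub i by (intro finite_PiE) (auto intro: finite_subset)
    have "(\<Sum>x\<in>Obs d m. D x * Phi i (restrict x (pa i)))
       = (\<Sum>z\<in>pa i \<rightarrow>\<^sub>E {..<m}. \<Sum>x\<in>{x\<in>Obs d m. restrict x (pa i) = z}. D x * Phi i (restrict x (pa i)))"
      by (rule sum.group[symmetric, OF finite_Obs fin]) (intro image_subsetI restr, use i in auto)
    also have "\<dots> = (\<Sum>z\<in>pa i \<rightarrow>\<^sub>E {..<m}. (\<Sum>x\<in>{x\<in>Obs d m. restrict x (pa i) = z}. D x) * Phi i z)"
      by (simp add: sum_distrib_right)
    finally show "(\<Sum>x\<in>Obs d m. D x * Phi i (restrict x (pa i)))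
       = (\<Sum>z\<in>pa i \<rightarrow>\<^sub>E {..<m}. (\<Sum>x\<in>{x\<in>Obs d m. restrict x (pa i) = z}. D x) * Phi i z)" .
  qed
  finally show ?thesis by (simp add: Phi_def)
qed

lemma W_val:
  assumes T': "T' \<in> fmodels H d m K pa" and h: "h < H" and Dnn: "\<forall>x\<in>Obs d m. 0 \<le> D x"
  shows "(SUP g \<in> {g :: nat \<Rightarrow> obs \<Rightarrow> nat \<Rightarrow> nat \<Rightarrow> real. \<forall>i z a y. g i z a y \<in> {-1, 1}}.
        (\<Sum>x\<in>Obs d m. D x *
           (\<Sum>a<K. (1 / real K) *
              (\<Sum>x'\<in>Obs d m. (trans_prob d pa T' h x a x' - trans_prob d pa Tstar h x a x') *
                 (\<Sum>i<d. g i (restrict x (pa i)) a (x' i))))))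
   = (\<Sum>i<d. \<Sum>z\<in>pa i \<rightarrow>\<^sub>E {..<m}. (\<Sum>x\<in>{x\<in>Obs d m. restrict x (pa i) = z}. D x) *
        (\<Sum>a<K. (1 / real K) * (\<Sum>y<m. \<bar>T' i h z a y - Tstar i h z a y\<bar>)))"
    (is "(SUP g \<in> ?G. ?V g) = ?R")
proof -
  define gs :: "nat \<Rightarrow> obs \<Rightarrow> nat \<Rightarrow> nat \<Rightarrow> real" where
    "gs i z a y = (if 0 \<le> T' i h z a y - Tstar i h z a y then 1 else -1)" for i z a y
  have gsG: "gs \<in> ?G" by (auto simp: gs_def)
  have Vgs: "?V gs = ?R"
    unfolding Vg[OF T' h]
    by (intro sum.cong refl arg_cong2[where f = "(*)"]) (auto simp: gs_def)
  have le: "?V g \<le> ?R" if g: "g \<in> ?G" for g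
    unfolding Vg[OF T' h]
  proof (intro sum_mono mult_left_mono)
    fix i z a y
    have "g i z a y \<in> {-1,1}" using g by auto
    then show "(T' i h z a y - Tstar i h z a y) * g i z a y \<le> \<bar>T' i h z a y - Tstar i h z a y\<bar>"
      by auto
  next
    fix i z show "0 \<le> (\<Sum>x\<in>{x\<in>Obs d m. restrict x (pa i) = z}. D x)"
      using Dnn by (intro sum_nonneg) auto
  qed simp
  have "Sup (?V ` ?G) = ?R"
  proof (rule cSup_eq_maximum)
    show "?R \<in> ?V ` ?G"
    proof (rule image_eqI[where x = gs])
      show "?R = ?V gs" by (rule Vgs[symmetric])
      show "gs \<in> ?G" by (rule gsG)
    qed
    show "\<And>v. v \<in> ?V ` ?G \<Longrightarrow> v \<le> ?R" using le by blast
  qed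
  then show ?thesis .
qed
end


lemma sumS:
  fixes f :: "nat \<times> obs \<times> nat \<Rightarrow> real" and d K :: nat
  assumes fin: "\<And>i. i < d \<Longrightarrow> finite (Z i)"
  shows "(\<Sum>s\<in>(SIGMA i:{..<d}. Z i \<times> {..<K}). f s) = (\<Sum>i<d. \<Sum>z\<in>Z i. \<Sum>a<K. f (i,z,a))"
proof -
  have "(\<Sum>i<d. \<Sum>z\<in>Z i. \<Sum>a<K. f (i,z,a)) = (\<Sum>i<d. \<Sum>p\<in>Z i \<times> {..<K}. f (i,p))"
    by (rule sum.cong[OF refl]) (simp add: sum.cartesian_product)
  also have "\<dots> = (\<Sum>s\<in>(SIGMA i:{..<d}. Z i \<times> {..<K}). f s)"
    using fin by (subst sum.Sigma) auto
  finally show ?thesis by simp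
qed

lemma cardS:
  fixes d K :: nat
  assumes fin: "\<And>i. i < d \<Longrightarrow> finite (Z i)"
  shows "card (SIGMA i:{..<d}. Z i \<times> {..<K}) = (\<Sum>i<d. card (Z i) * K)"
  using fin by (subst card_SigmaI) (auto simp: card_cartesian_product simp del: card_SigmaI)


theorem mainTheorem10:
  shows "\<exists>C::real. \<forall>H d m K (pa :: nat \<Rightarrow> nat set) (R :: nat \<Rightarrow> obs \<Rightarrow> nat \<Rightarrow> real)
            (mu0 :: obs \<Rightarrow> real) (Tstar :: ftrans).
     0 < m \<and> 0 < K \<and> (\<forall>i<d. pa i \<subseteq> {..<d}) \<and>
     Tstar \<in> fmodels H d m K pa \<and>
     (\<forall>x\<in>Obs d m. 0 \<le> mu0 x) \<and> (\<Sum>x\<in>Obs d m. mu0 x) = 1 \<longrightarrow>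
     (\<forall>h<H. \<exists>(zeta :: ftrans \<Rightarrow> nat \<Rightarrow> real) (chi :: ftrans \<Rightarrow> nat \<Rightarrow> real).
        \<forall>T\<in>fmodels H d m K pa. \<forall>T'\<in>fmodels H d m K pa.
          W_F H d m K pa R mu0 Tstar T T' h
            = vinner (L_dim d m K pa div m) (zeta T) (chi T') \<and>
          vnorm (L_dim d m K pa div m) (zeta T) * vnorm (L_dim d m K pa div m) (chi T')
            \<le> C * real (L_dim d m K pa) / real K)"
proof (intro exI[where x = 2] allI impI)
  fix H d m K :: nat and pa :: "nat \<Rightarrow> nat set" and R :: "nat \<Rightarrow> obs \<Rightarrow> nat \<Rightarrow> real"
    and mu0 :: "obs \<Rightarrow> real" and Tstar :: ftrans and h :: nat
  assume A: "0 < m \<and> 0 < K \<and> (\<forall>i<d. pa i \<subseteq> {..<d}) \<and>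
     Tstar \<in> fmodels H d m K pa \<and>
     (\<forall>x\<in>Obs d m. 0 \<le> mu0 x) \<and> (\<Sum>x\<in>Obs d m. mu0 x) = 1"
  assume h: "h < H"
  interpret fm H d m K pa Tstar mu0 using A by unfold_locales auto
  define Z where "Z i = pa i \<rightarrow>\<^sub>E {..<m}" for i
  have finZ: "finite (Z i)" if "i < d" for i
    using pa_sub that unfolding Z_def by (intro finite_PiE) (auto intro: finite_subset)
  define S where "S = (SIGMA i:{..<d}. Z i \<times> {..<K})"
  have finS: "finite S" unfolding S_def using finZ by (auto intro!: finite_SigmaI)
  define N where "N = card S"
  have cardZ: "card (Z i) = m ^ card (pa i)" if "i < d" for i
  proof -
    have "finite (pa i)" using pa_sub that by (auto intro: finite_subset)
    then show ?thesis unfolding Z_def by (simp add: card_PiE)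
  qed
  have N_eq: "N = (\<Sum>i<d. K * m ^ card (pa i))"
    unfolding N_def S_def by (simp add: cardS finZ cardZ mult.commute)
  have LN: "L_dim d m K pa = m * N"
    unfolding L_dim_def N_eq by (simp add: sum_distrib_left algebra_simps)
  have Ldiv: "L_dim d m K pa div m = N" using LN mpos by simp
  have dK: "d * K \<le> N"
  proof -
    have "(\<Sum>i<d. K) \<le> (\<Sum>i<d. K * m ^ card (pa i))"
      using mpos by (intro sum_mono) simp
    then show ?thesis unfolding N_eq by (simp add: mult.commute)
  qed
  obtain e where e: "bij_betw e {..<N} S"
    using ex_bij_betw_nat_finite[OF finS] unfolding N_def lessThan_atLeast0 by blast
  define D where "D T x = state_dist d m pa Tstar mu0 (greedy_policy H d m K pa R T) h x" for T x
  have Dprop: "(\<forall>x\<in>Obs d m. 0 \<le> D T x) \<and> (\<Sum>x\<in>Obs d m. D T x) = 1" for T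
    unfolding D_def using sd[of "greedy_policy H d m K pa R T" h] greedy_lt[OF Kpos] h by auto
  define w where "w T i z = (\<Sum>x\<in>{x\<in>Obs d m. restrict x (pa i) = z}. D T x)" for T i z
  define del where "del T' i z a = (\<Sum>y<m. \<bar>T' i h z a y - Tstar i h z a y\<bar>)" for T' i z a
  define zf where "zf T = (\<lambda>(i,z,a::nat). w T i z / real K)" for T
  define cf where "cf T' = (\<lambda>(i::nat,z,a::nat). del T' i z a)" for T'
  define zeta where "zeta T j = zf T (e j)" for T j
  define chi where "chi T' j = cf T' (e j)" for T' j
  have reidx: "(\<Sum>j<N. f (e j)) = (\<Sum>s\<in>S. f s)" for f :: "nat \<times> obs \<times> nat \<Rightarrow> real"
    by (rule sum.reindex_bij_betw[OF e])
  have w_nn: "0 \<le> w T i z" for T i z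
    unfolding w_def using Dprop[of T] by (intro sum_nonneg) auto
  have w_sum: "(\<Sum>z\<in>Z i. w T i z) = 1" if i: "i < d" for T i
  proof -
    have "(\<Sum>z\<in>Z i. w T i z) = (\<Sum>x\<in>Obs d m. D T x)"
      unfolding w_def by (rule sum.group[OF finite_Obs finZ[OF i]]) (use restr i in \<open>simp add: Z_def image_subset_iff\<close>)
    then show ?thesis using Dprop[of T] by simp
  qed
  have w_le: "w T i z \<le> 1" if i: "i < d" and z: "z \<in> Z i" for T i z
  proof -
    have "w T i z \<le> (\<Sum>z\<in>Z i. w T i z)"
      by (rule member_le_sum[OF z]) (use w_nn finZ[OF i] in auto)
    then show ?thesis using w_sum[OF i] by simp
  qed
  have del_nn: "0 \<le> del T' i z a" for T' i z a unfolding del_def by (intro sum_nonneg) auto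
  have del_le: "del T' i z a \<le> 2" if T': "T' \<in> fmodels H d m K pa" and i: "i < d"
      and z: "z \<in> Z i" and a: "a < K" for T' i z a
  proof -
    have zz: "z \<in> pa i \<rightarrow>\<^sub>E {..<m}" using z unfolding Z_def .
    have "del T' i z a \<le> (\<Sum>y<m. T' i h z a y + Tstar i h z a y)"
      unfolding del_def
    proof (intro sum_mono)
      fix y assume "y \<in> {..<m}"
      then have "0 \<le> T' i h z a y" "0 \<le> Tstar i h z a y"
        using fm_props(2)[OF T' i h zz a] fm_props(2)[OF Ts i h zz a] by auto
      then show "\<bar>T' i h z a y - Tstar i h z a y\<bar> \<le> T' i h z a y + Tstar i h z a y" by linarith
    qed
    also have "\<dots> = 2"
      using fm_props(1)[OF T' i h zz a] fm_props(1)[OF Ts i h zz a] by (simp add: sum.distrib)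
    finally show ?thesis .
  qed
  have key: "W_F H d m K pa R mu0 Tstar T T' h
            = vinner (L_dim d m K pa div m) (zeta T) (chi T') \<and>
          vnorm (L_dim d m K pa div m) (zeta T) * vnorm (L_dim d m K pa div m) (chi T')
            \<le> 2 * real (L_dim d m K pa) / real K"
    if T: "T \<in> fmodels H d m K pa" and T': "T' \<in> fmodels H d m K pa" for T T'
  proof -
    have "W_F H d m K pa R mu0 Tstar T T' h
        = (\<Sum>i<d. \<Sum>z\<in>Z i. w T i z * (\<Sum>a<K. (1 / real K) * del T' i z a))"
      unfolding W_F_def D_def[symmetric] W_val[OF T' h conjunct1[OF Dprop]]
      by (simp add: w_def del_def Z_def)
    also have "\<dots> = (\<Sum>i<d. \<Sum>z\<in>Z i. \<Sum>a<K. zf T (i,z,a) * cf T' (i,z,a))"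
      by (simp add: zf_def cf_def sum_distrib_left)
    also have "\<dots> = (\<Sum>s\<in>S. zf T s * cf T' s)"
      unfolding S_def by (rule sumS[symmetric]) (rule finZ)
    also have "\<dots> = vinner (L_dim d m K pa div m) (zeta T) (chi T')"
      unfolding vinner_def Ldiv zeta_def chi_def by (rule reidx[symmetric])
    finally have eq: "W_F H d m K pa R mu0 Tstar T T' h
            = vinner (L_dim d m K pa div m) (zeta T) (chi T')" .
    have Az: "(\<Sum>j<N. (zeta T j)\<^sup>2) \<le> real d / real K"
    proof -
      have "(\<Sum>j<N. (zeta T j)\<^sup>2) = (\<Sum>i<d. \<Sum>z\<in>Z i. \<Sum>a<K. (zf T (i,z,a))\<^sup>2)"
        unfolding zeta_def reidx[of "\<lambda>s. (zf T s)\<^sup>2"] S_def by (rule sumS) (rule finZ)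
      also have "\<dots> \<le> (\<Sum>i<d. \<Sum>z\<in>Z i. \<Sum>a<K. w T i z / (real K)\<^sup>2)"
      proof (intro sum_mono)
        fix i z a assume i: "i \<in> {..<d}" and z: "z \<in> Z i"
        have "(w T i z)\<^sup>2 \<le> w T i z"
          using w_nn[of T i z] w_le[of i z T] i z by (simp add: power2_eq_square mult_left_le)
        then show "(zf T (i,z,a))\<^sup>2 \<le> w T i z / (real K)\<^sup>2"
          by (simp add: zf_def power_divide divide_right_mono)
      qed
      also have "\<dots> = (\<Sum>i<d. real K / (real K)\<^sup>2 * (\<Sum>z\<in>Z i. w T i z))"
        by (simp add: sum_distrib_left)
      also have "\<dots> = real d / real K"
        using Kpos by (simp add: w_sum power2_eq_square)
      finally show ?thesis .
    qed
    have Bc: "(\<Sum>j<N. (chi T' j)\<^sup>2) \<le> 4 * real N"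
    proof -
      have "(\<Sum>j<N. (chi T' j)\<^sup>2) = (\<Sum>s\<in>S. (cf T' s)\<^sup>2)"
        unfolding chi_def by (rule reidx)
      also have "\<dots> \<le> (\<Sum>s\<in>S. 4)"
      proof (rule sum_mono)
        fix s assume s: "s \<in> S"
        obtain i z a where s': "s = (i,z,a)" by (cases s) auto
        have "i < d" "z \<in> Z i" "a < K" using s unfolding s' S_def by auto
        then have "del T' i z a \<le> 2" "0 \<le> del T' i z a" using del_le[OF T'] del_nn by auto
        then have "(del T' i z a)\<^sup>2 \<le> 2\<^sup>2" by (intro power_mono) auto
        then show "(cf T' s)\<^sup>2 \<le> 4" by (simp add: s' cf_def)
      qed
      also have "\<dots> = 4 * real N" by (simp add: N_def)
      finally show ?thesis .
    qed
    have Kp: "0 < real K" using Kpos by simp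
    have prod_le: "(real d / real K) * (4 * real N) \<le> (2 * real N / real K)\<^sup>2"
    proof -
      have "real d * real K \<le> real N" using dK by (metis of_nat_le_iff of_nat_mult)
      then have "real d \<le> real N / real K" using Kp by (simp add: field_simps)
      then have "(real d / real K) * (4 * real N) \<le> (real N / real K / real K) * (4 * real N)"
        using Kp by (intro mult_right_mono divide_right_mono) auto
      also have "\<dots> = (2 * real N / real K)\<^sup>2" by (simp add: power2_eq_square field_simps)
      finally show ?thesis .
    qed
    have "vnorm N (zeta T) * vnorm N (chi T') = sqrt ((\<Sum>j<N. (zeta T j)\<^sup>2) * (\<Sum>j<N. (chi T' j)\<^sup>2))"
      unfolding vnorm_def by (simp add: real_sqrt_mult)
    also have "\<dots> \<le> sqrt ((real d / real K) * (4 * real N))"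
      using Az Bc by (intro real_sqrt_le_mono mult_mono) (auto intro: sum_nonneg)
    also have "\<dots> \<le> sqrt ((2 * real N / real K)\<^sup>2)"
      using prod_le by (rule real_sqrt_le_mono)
    also have "\<dots> = 2 * real N / real K" using Kp by simp
    also have "\<dots> \<le> 2 * real (L_dim d m K pa) / real K"
    proof -
      have "N \<le> m * N" using mpos by simp
      then have "real N \<le> real (L_dim d m K pa)" unfolding LN by linarith
      then show ?thesis using Kp by (simp add: divide_right_mono)
    qed
    finally have le: "vnorm (L_dim d m K pa div m) (zeta T) * vnorm (L_dim d m K pa div m) (chi T')
            \<le> 2 * real (L_dim d m K pa) / real K" unfolding Ldiv .
    show "W_F H d m K pa R mu0 Tstar T T' h
            = vinner (L_dim d m K pa div m) (zeta T) (chi T') \<and>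
          vnorm (L_dim d m K pa div m) (zeta T) * vnorm (L_dim d m K pa div m) (chi T')
            \<le> 2 * real (L_dim d m K pa) / real K" using eq le by blast
  qed
  show "\<exists>zeta chi. \<forall>T\<in>fmodels H d m K pa. \<forall>T'\<in>fmodels H d m K pa.
          W_F H d m K pa R mu0 Tstar T T' h
            = vinner (L_dim d m K pa div m) (zeta T) (chi T') \<and>
          vnorm (L_dim d m K pa div m) (zeta T) * vnorm (L_dim d m K pa div m) (chi T')
            \<le> 2 * real (L_dim d m K pa) / real K" by (intro exI[where x = zeta] exI[where x = chi] ballI key)
qed

end
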